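(* Fix $0<a<2$. For every $p\in\mathbb N$ with $p<4/a$ and every $0<r<\infty$, $$Z(p,r):=\int_{\mathbb B(0,r)^p}\prod_{1\le i<j\le p}\frac1{\|z_j-z_i\|^{a}}\,dz_1\cdots dz_p<\infty.$$
   Context: Here $z_j\in\mathbb R^2$, $\|(t,x)\|=|t|+|x|$ on $\mathbb R^2$, $\mathbb B(0,r)=\{w\in\mathbb R^2:\|w\|<r\}$, and $\mathbb B(0,r)^p\subset\mathbb R^{2p}$ with Lebesgue measure. *)

theory Defs
  imports "HOL-Analysis.Analysis"
begin

definition norm1 :: "real \<times> real \<Rightarrow> real" where
  "norm1 w = \<bar>fst w\<bar> + \<bar>snd w\<bar>"

definition ball1 :: "real \<Rightarrow> (real \<times> real) set" where
  "ball1 r = {w. norm1 w < r}"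

text \<open>The factor 1/||z_j - z_i||^a is
taken in ennreal, so it equals infinity on the diagonal z_i = z_j.\<close>
definition Zint :: "real \<Rightarrow> nat \<Rightarrow> real \<Rightarrow> ennreal" where
  "Zint a p r = (\<integral>\<^sup>+ z. indicator (PiE {..<p} (\<lambda>_. ball1 r)) z *
      (\<Prod>ij\<in>{(i, j). i < j \<and> j < p}.
         inverse (ennreal (norm1 (z (snd ij) - z (fst ij)) powr a)))
      \<partial>(PiM {..<p} (\<lambda>_. (lborel :: (real \<times> real) measure))))"

end

theory Submission
  imports Defs
begin


definition psi :: "real \<Rightarrow> real \<Rightarrow> ennreal" where
  "psi c s = inverse (ennreal (\<bar>s\<bar> powr c))"

lemma psi_meas[measurable]: "psi c \<in> borel_measurable borel"
  unfolding psi_def by measurable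

lemma half_finite:
  assumes "0 \<le> c" "c < 1" "0 \<le> R"
  shows "(\<integral>\<^sup>+u. indicator {0..R} u * psi c u \<partial>lborel) < \<infinity>"
proof -
  have "(\<integral>\<^sup>+u. indicator {0..R} u * psi c u \<partial>lborel)
      = (\<integral>\<^sup>+u. ennreal (indicator {0..R} u * u powr (-c)) \<partial>lborel)"
  proof (rule nn_integral_cong_AE)
    show "AE u in lborel. indicator {0..R} u * psi c u = ennreal (indicator {0..R} u * u powr (-c))"
      using AE_lborel_singleton[of 0]
    proof eventually_elim
      case (elim u)
      show ?case
      proof (cases "u \<in> {0..R}")
        case True
        then have "u > 0" using elim by auto
        then show ?thesis using True
          by (simp add: psi_def inverse_ennreal powr_minus)
      qed simp
    qed
  qed
  also have "\<dots> = ennreal (R powr (-c+1) / (-c+1))"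
  proof -
    have "((\<lambda>u. u powr (-c)) has_integral (R powr (-c+1) / (-c+1))) {0..R}"
      by (rule has_integral_powr_from_0) (use assms in auto)
    moreover have "(\<lambda>u. indicator {0..R} u * u powr (-c)) = (\<lambda>u. if u \<in> {0..R} then u powr (-c) else 0)"
      by (auto simp: indicator_def)
    ultimately have "((\<lambda>u. indicator {0..R} u * u powr (-c)) has_integral (R powr (-c+1) / (-c+1))) UNIV"
      by (simp only: has_integral_restrict_UNIV)
    then show ?thesis
      by (subst nn_integral_has_integral_lborel) (auto simp: indicator_def)
  qed
  finally show ?thesis by simp
qed

lemma sym_finite:
  assumes "0 \<le> c" "c < 1" "0 \<le> R"
  shows "(\<integral>\<^sup>+u. indicator {-R..R} u * psi c u \<partial>lborel) < \<infinity>"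
proof -
  have "(\<integral>\<^sup>+u. indicator {-R..R} u * psi c u \<partial>lborel) \<le>
     (\<integral>\<^sup>+u. indicator {0..R} u * psi c u + indicator {0..R} (-u) * psi c (-u) \<partial>lborel)"
    by (rule nn_integral_mono) (auto simp: indicator_def psi_def)
  also have "\<dots> = (\<integral>\<^sup>+u. indicator {0..R} u * psi c u \<partial>lborel) + (\<integral>\<^sup>+u. indicator {0..R} (-u) * psi c (-u) \<partial>lborel)"
    by (rule nn_integral_add) auto
  also have "(\<integral>\<^sup>+u. indicator {0..R} (-u) * psi c (-u) \<partial>lborel) = (\<integral>\<^sup>+u. indicator {0..R} u * psi c u \<partial>lborel)"
    using nn_integral_real_affine[of "\<lambda>u. indicator {0..R} u * psi c u" "-1" 0] by simp
  finally show ?thesis using half_finite[OF assms]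
    by (simp add: less_top order_le_less_trans)
qed

lemma shift_bound:
  assumes "0 \<le> r" "s \<in> {-r..r}"
  shows "(\<integral>\<^sup>+t. indicator {-r..r} t * psi c (t - s) \<partial>lborel) \<le>
         (\<integral>\<^sup>+u. indicator {-(2*r)..2*r} u * psi c u \<partial>lborel)"
proof -
  have "(\<integral>\<^sup>+t. indicator {-r..r} t * psi c (t - s) \<partial>lborel) \<le>
        (\<integral>\<^sup>+t. indicator {-(2*r)..2*r} (-s + t) * psi c (-s + t) \<partial>lborel)"
    by (rule nn_integral_mono) (use assms in \<open>auto simp: indicator_def\<close>)
  also have "\<dots> = (\<integral>\<^sup>+u. indicator {-(2*r)..2*r} u * psi c u \<partial>lborel)"
    using nn_integral_real_affine[of "\<lambda>u. indicator {-(2*r)..2*r} u * psi c u" 1 "-s"] by simp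
  finally show ?thesis .
qed

lemma prod_integral2:
  fixes f g :: "real \<Rightarrow> ennreal"
  assumes [measurable]: "f \<in> borel_measurable borel" "g \<in> borel_measurable borel"
  shows "(\<integral>\<^sup>+u. f (fst u) * g (snd u) \<partial>(lborel::(real\<times>real) measure)) =
         (\<integral>\<^sup>+x. f x \<partial>lborel) * (\<integral>\<^sup>+y. g y \<partial>lborel)"
proof -
  have "(\<integral>\<^sup>+u. f (fst u) * g (snd u) \<partial>(lborel::(real\<times>real) measure)) =
        (\<integral>\<^sup>+u. f (fst u) * g (snd u) \<partial>(lborel \<Otimes>\<^sub>M lborel))"
    by (simp only: lborel_prod)
  also have "\<dots> = (\<integral>\<^sup>+x. \<integral>\<^sup>+y. f x * g y \<partial>lborel \<partial>lborel)"
    by (subst lborel.nn_integral_fst[symmetric]) auto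
  also have "\<dots> = (\<integral>\<^sup>+x. f x * (\<integral>\<^sup>+y. g y \<partial>lborel) \<partial>lborel)"
    by (simp add: nn_integral_cmult)
  also have "\<dots> = (\<integral>\<^sup>+x. f x \<partial>lborel) * (\<integral>\<^sup>+y. g y \<partial>lborel)"
    by (simp add: nn_integral_multc)
  finally show ?thesis .
qed

definition Bx :: "real \<Rightarrow> real \<times> real \<Rightarrow> ennreal" where
  "Bx r w = indicator {-r..r} (fst w) * indicator {-r..r} (snd w)"

definition gg :: "real \<Rightarrow> real \<times> real \<Rightarrow> ennreal" where
  "gg c w = psi c (fst w) * psi c (snd w)"

lemma Bx_meas[measurable]: "Bx r \<in> borel_measurable borel"
  unfolding Bx_def borel_prod[symmetric] by measurable
lemma gg_meas[measurable]: "gg c \<in> borel_measurable borel"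
  unfolding gg_def borel_prod[symmetric] by measurable

lemma two_d_bound:
  assumes "0 \<le> r" "Bx r y \<noteq> 0"
  shows "(\<integral>\<^sup>+u. Bx r u * gg c (u - y) \<partial>lborel) \<le>
     (\<integral>\<^sup>+u. indicator {-(2*r)..2*r} u * psi c u \<partial>lborel) * (\<integral>\<^sup>+u. indicator {-(2*r)..2*r} u * psi c u \<partial>lborel)"
proof -
  have y: "fst y \<in> {-r..r}" "snd y \<in> {-r..r}" using assms(2) by (auto simp: Bx_def indicator_def split: if_splits)
  have "(\<integral>\<^sup>+u. Bx r u * gg c (u - y) \<partial>lborel) =
     (\<integral>\<^sup>+u. (indicator {-r..r} (fst u) * psi c (fst u - fst y)) * (indicator {-r..r} (snd u) * psi c (snd u - snd y)) \<partial>lborel)"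
    by (rule nn_integral_cong) (simp add: Bx_def gg_def mult_ac)
  also have "\<dots> = (\<integral>\<^sup>+t. indicator {-r..r} t * psi c (t - fst y) \<partial>lborel) * (\<integral>\<^sup>+t. indicator {-r..r} t * psi c (t - snd y) \<partial>lborel)"
    by (rule prod_integral2) auto
  also have "\<dots> \<le> (\<integral>\<^sup>+u. indicator {-(2*r)..2*r} u * psi c u \<partial>lborel) * (\<integral>\<^sup>+u. indicator {-(2*r)..2*r} u * psi c u \<partial>lborel)"
    by (intro mult_mono shift_bound y assms) auto
  finally show ?thesis .
qed



lemma psi_ne0: "psi c s \<noteq> 0"
  unfolding psi_def by simp

lemma psi_zero: "psi c 0 = top"
  unfolding psi_def by simp

lemma psi_pos: "s \<noteq> 0 \<Longrightarrow> psi c s = ennreal (inverse (\<bar>s\<bar> powr c))"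
  unfolding psi_def by (simp add: inverse_ennreal)

lemma psi_pow: "n \<ge> 1 \<Longrightarrow> psi d s ^ n = psi (d * real n) s"
proof (cases "s = 0")
  case True
  assume "n \<ge> 1"
  then show ?thesis using True by (simp add: psi_zero)
next
  case False
  assume "n \<ge> 1"
  have "psi d s ^ n = ennreal (inverse (\<bar>s\<bar> powr d)) ^ n" using False by (simp add: psi_pos)
  also have "\<dots> = ennreal (inverse (\<bar>s\<bar> powr d) ^ n)" by (rule ennreal_power) simp
  also have "inverse (\<bar>s\<bar> powr d) ^ n = inverse ((\<bar>s\<bar> powr d) ^ n)" by (rule power_inverse)
  also have "(\<bar>s\<bar> powr d) ^ n = \<bar>s\<bar> powr (d * real n)"
    using False by (subst powr_power) (auto simp: mult.commute)
  finally show ?thesis using False by (simp add: psi_pos)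
qed

lemma psi_sym: "psi d (-s) = psi d s"
  unfolding psi_def by simp

lemma gg_sym: "gg d (x - y) = gg d (y - x)"
proof -
  have "x - y = - (y - x)" by simp
  have p: "\<And>u v. psi d (u - v) = psi d (v - u)" by (metis minus_diff_eq psi_sym)
  show ?thesis unfolding gg_def fst_diff snd_diff using p[of "fst x" "fst y"] p[of "snd x" "snd y"] by simp
qed

lemma gg_pow: "n \<ge> 1 \<Longrightarrow> gg d w ^ n = gg (d * real n) w"
  unfolding gg_def by (simp add: power_mult_distrib psi_pow)

lemma F_bound:
  assumes "0 < a"
  shows "inverse (ennreal (norm1 w powr a)) \<le> gg (a/4) w ^ 2"
proof -
  have e0: "gg (a/4) w ^ 2 = gg (a/4 * real 2) w" by (rule gg_pow) simp
  have e: "gg (a/4) w ^ 2 = psi (a/2) (fst w) * psi (a/2) (snd w)"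
  proof -
    have "gg (a/4) w ^ 2 = gg (a/2) w" using e0 by simp
    then show ?thesis by (simp add: gg_def)
  qed
  show ?thesis
  proof (cases "fst w = 0 \<or> snd w = 0")
    case True
    then show ?thesis unfolding e
      by (elim disjE) (simp_all add: psi_zero psi_ne0)
  next
    case False
    then have t: "\<bar>fst w\<bar> > 0" "\<bar>snd w\<bar> > 0" by auto
    let ?N = "norm1 w"
    have N: "?N > 0" using t by (simp add: norm1_def)
    have "\<bar>fst w\<bar> * \<bar>snd w\<bar> \<le> ?N^2"
      using t unfolding norm1_def by (simp add: power2_eq_square algebra_simps)
    then have "(\<bar>fst w\<bar> * \<bar>snd w\<bar>) powr (a/2) \<le> (?N^2) powr (a/2)"
      using assms t by (intro powr_mono2) auto
    also have "(?N^2) powr (a/2) = ?N powr a"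
    proof -
      have "?N powr 2 = ?N^2" using powr_realpow[OF N, of 2] by simp
      then have "(?N^2) powr (a/2) = (?N powr 2) powr (a/2)" by simp
      also have "\<dots> = ?N powr a" by (simp add: powr_powr)
      finally show ?thesis .
    qed
    finally have le: "(\<bar>fst w\<bar> * \<bar>snd w\<bar>) powr (a/2) \<le> ?N powr a" .
    have pos: "(\<bar>fst w\<bar> * \<bar>snd w\<bar>) powr (a/2) > 0" using t by simp
    have "inverse (?N powr a) \<le> inverse ((\<bar>fst w\<bar> * \<bar>snd w\<bar>) powr (a/2))"
      using le pos by (intro le_imp_inverse_le) auto
    also have "\<dots> = inverse (\<bar>fst w\<bar> powr (a/2)) * inverse (\<bar>snd w\<bar> powr (a/2))"
      by (simp add: powr_mult)
    finally have L: "ennreal (inverse (?N powr a)) \<le> ennreal (inverse (\<bar>fst w\<bar> powr (a/2)) * inverse (\<bar>snd w\<bar> powr (a/2)))"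
      by (rule ennreal_leI)
    have A: "inverse (ennreal (?N powr a)) = ennreal (inverse (?N powr a))"
      using N by (intro inverse_ennreal) simp
    have f0: "fst w \<noteq> 0" "snd w \<noteq> 0" using False by auto
    have B: "psi (a/2) (fst w) * psi (a/2) (snd w) = ennreal (inverse (\<bar>fst w\<bar> powr (a/2)) * inverse (\<bar>snd w\<bar> powr (a/2)))"
      unfolding psi_pos[OF f0(1)] psi_pos[OF f0(2)] by (rule ennreal_mult[symmetric]) auto
    show ?thesis unfolding e A B by (rule L)
  qed
qed

lemma prod_max_bound:
  fixes G :: "'a \<Rightarrow> ennreal"
  assumes "finite I" "I \<noteq> {}"
  shows "(\<Prod>i\<in>I. G i) \<le> (\<Sum>i\<in>I. G i ^ card I)"
proof -
  have "Max (G ` I) \<in> G ` I" using assms by (intro Max_in) auto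
  then obtain k where k1: "k \<in> I" "G k = Max (G ` I)" by auto
  have k: "k \<in> I" "\<And>i. i \<in> I \<Longrightarrow> G i \<le> G k"
    using k1 assms by auto
  have "(\<Prod>i\<in>I. G i) \<le> (\<Prod>i\<in>I. G k)"
    by (rule prod_mono_ennreal) (use k in auto)
  also have "\<dots> = G k ^ card I" by simp
  also have "\<dots> \<le> (\<Sum>i\<in>I. G i ^ card I)"
    by (rule member_le_sum) (use k assms in auto)
  finally show ?thesis .
qed

lemma sym_prod:
  fixes h :: "nat \<Rightarrow> nat \<Rightarrow> ennreal"
  assumes sym: "\<And>i j. h i j = h j i"
  shows "(\<Prod>ij\<in>{(i, j). i < j \<and> j < n}. h (fst ij) (snd ij) ^ 2) =
         (\<Prod>i<n. \<Prod>j\<in>{..<n}-{i}. h i j)"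
proof -
  let ?P = "{(i, j). i < j \<and> j < n}" and ?Q = "{(i, j). j < i \<and> i < n}"
  have fP: "finite ?P" by (rule finite_subset[of _ "{..<n}\<times>{..<n}"]) auto
  have fQ: "finite ?Q" by (rule finite_subset[of _ "{..<n}\<times>{..<n}"]) auto
  have sw: "(\<Prod>ij\<in>?P. h (fst ij) (snd ij)) = (\<Prod>ij\<in>?Q. h (fst ij) (snd ij))"
    by (rule prod.reindex_bij_witness[of _ "\<lambda>(i,j). (j,i)" "\<lambda>(i,j). (j,i)"]) (auto simp: sym)
  have un: "(\<Prod>ij\<in>?P. h (fst ij) (snd ij)) * (\<Prod>ij\<in>?Q. h (fst ij) (snd ij)) =
             (\<Prod>ij\<in>?P \<union> ?Q. h (fst ij) (snd ij))"
    by (rule prod.union_disjoint[symmetric]) (use fP fQ in auto)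
  have PQ: "?P \<union> ?Q = Sigma {..<n} (\<lambda>i. {..<n}-{i})" by auto
  have sg: "(\<Prod>ij\<in>Sigma {..<n} (\<lambda>i. {..<n}-{i}). h (fst ij) (snd ij)) = (\<Prod>i<n. \<Prod>j\<in>{..<n}-{i}. h i j)"
    using prod.Sigma[of "{..<n}" "\<lambda>i. {..<n}-{i}" h] by (simp add: case_prod_unfold)
  have "(\<Prod>ij\<in>?P. h (fst ij) (snd ij) ^ 2) = (\<Prod>ij\<in>?P. h (fst ij) (snd ij)) * (\<Prod>ij\<in>?P. h (fst ij) (snd ij))"
    by (simp add: power2_eq_square prod.distrib)
  also have "\<dots> = (\<Prod>ij\<in>?P. h (fst ij) (snd ij)) * (\<Prod>ij\<in>?Q. h (fst ij) (snd ij))"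
    using sw by (rule arg_cong)
  also note un
  also have "(\<Prod>ij\<in>?P \<union> ?Q. h (fst ij) (snd ij)) = (\<Prod>ij\<in>Sigma {..<n} (\<lambda>i. {..<n}-{i}). h (fst ij) (snd ij))"
    by (simp only: PQ)
  also note sg
  finally show ?thesis .
qed



lemma pointwise:
  fixes p :: nat
  assumes "0 < a" "1 \<le> p"
  shows "indicator (PiE {..<p} (\<lambda>_. ball1 r)) z *
      (\<Prod>ij\<in>{(i, j). i < j \<and> j < p}. inverse (ennreal (norm1 (z (snd ij) - z (fst ij)) powr a)))
    \<le> (\<Sum>i<p. (\<Prod>j<p. Bx r (z j)) * (\<Prod>j\<in>{..<p}-{i}. gg (a/4 * real p) (z j - z i)))"
proof -
  define h where "h i j = gg (a/4) (z j - z i)" for i j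
  have sym: "h i j = h j i" for i j unfolding h_def by (rule gg_sym)
  have "(\<Prod>ij\<in>{(i, j). i < j \<and> j < p}. inverse (ennreal (norm1 (z (snd ij) - z (fst ij)) powr a)))
      \<le> (\<Prod>ij\<in>{(i, j). i < j \<and> j < p}. h (fst ij) (snd ij) ^ 2)"
    unfolding h_def by (rule prod_mono_ennreal) (rule F_bound[OF assms(1)])
  also have "\<dots> = (\<Prod>i<p. \<Prod>j\<in>{..<p}-{i}. h i j)"
    by (rule sym_prod) (rule sym)
  also have "\<dots> \<le> (\<Sum>i<p. (\<Prod>j\<in>{..<p}-{i}. h i j) ^ card {..<p})"
    by (rule prod_max_bound) (use assms in \<open>auto simp: lessThan_empty_iff\<close>)
  also have "\<dots> = (\<Sum>i<p. (\<Prod>j\<in>{..<p}-{i}. gg (a/4 * real p) (z j - z i)))"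
    by (rule sum.cong) (use assms in \<open>auto simp: h_def prod_power_distrib gg_pow\<close>)
  finally have P: "(\<Prod>ij\<in>{(i, j). i < j \<and> j < p}. inverse (ennreal (norm1 (z (snd ij) - z (fst ij)) powr a)))
      \<le> (\<Sum>i<p. (\<Prod>j\<in>{..<p}-{i}. gg (a/4 * real p) (z j - z i)))" .
  have I: "indicator (PiE {..<p} (\<lambda>_. ball1 r)) z \<le> (\<Prod>j<p. Bx r (z j))"
  proof (cases "z \<in> PiE {..<p} (\<lambda>_. ball1 r)")
    case True
    then have "Bx r (z j) = 1" if "j < p" for j
      using that by (auto simp: Bx_def ball1_def norm1_def PiE_def Pi_def indicator_def)
    then show ?thesis using True by simp
  qed simp
  have "indicator (PiE {..<p} (\<lambda>_. ball1 r)) z *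
      (\<Prod>ij\<in>{(i, j). i < j \<and> j < p}. inverse (ennreal (norm1 (z (snd ij) - z (fst ij)) powr a)))
     \<le> (\<Prod>j<p. Bx r (z j)) * (\<Sum>i<p. (\<Prod>j\<in>{..<p}-{i}. gg (a/4 * real p) (z j - z i)))"
    by (rule mult_mono[OF I P]) auto
  also have "\<dots> = (\<Sum>i<p. (\<Prod>j<p. Bx r (z j)) * (\<Prod>j\<in>{..<p}-{i}. gg (a/4 * real p) (z j - z i)))"
    by (rule sum_distrib_left)
  finally show ?thesis .
qed

lemma Kfin:
  assumes "0 \<le> c" "c < 1" "0 < r"
  shows "(\<integral>\<^sup>+u. indicator {-(2*r)..2*r} u * psi c u \<partial>lborel) < \<infinity>"
  by (rule sym_finite) (use assms in auto)

lemma term_finite: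
  fixes p i :: nat
  assumes "i < p" "0 \<le> c" "c < 1" "0 < r"
  shows "(\<integral>\<^sup>+z. (\<Prod>j<p. Bx r (z j)) * (\<Prod>j\<in>{..<p}-{i}. gg c (z j - z i))
           \<partial>PiM {..<p} (\<lambda>_. (lborel :: (real \<times> real) measure))) < \<infinity>"
proof -
  interpret product_sigma_finite "\<lambda>_::nat. (lborel :: (real \<times> real) measure)"
    by standard
  define J where "J = {..<p} - {i}"
  have iJ: "{..<p} = insert i J" "i \<notin> J" "finite J" using assms(1) by (auto simp: J_def)
  define K where "K = (\<integral>\<^sup>+u. indicator {-(2*r)..2*r} u * psi c u \<partial>lborel)"
  have K: "K < \<infinity>" unfolding K_def by (rule Kfin) (use assms in auto)
  have iJ2: "insert i J - {i} = J" using iJ(2) by auto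
  have im: "i \<in> {..<p}" using assms by simp
  have meas: "(\<lambda>z. (\<Prod>j<p. Bx r (z j)) * (\<Prod>j\<in>{..<p}-{i}. gg c (z j - z i)))
      \<in> borel_measurable (PiM {..<p} (\<lambda>_. (lborel :: (real \<times> real) measure)))"
    using im by measurable
  have "(\<integral>\<^sup>+z. (\<Prod>j<p. Bx r (z j)) * (\<Prod>j\<in>{..<p}-{i}. gg c (z j - z i))
           \<partial>PiM {..<p} (\<lambda>_. (lborel :: (real \<times> real) measure)))
     = (\<integral>\<^sup>+y. (\<integral>\<^sup>+x. (\<Prod>j\<in>insert i J. Bx r ((x(i:=y)) j)) * (\<Prod>j\<in>J. gg c ((x(i:=y)) j - (x(i:=y)) i))
           \<partial>PiM J (\<lambda>_. lborel)) \<partial>lborel)"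
    using meas unfolding iJ(1) iJ2 by (rule product_nn_integral_insert_rev[OF iJ(3,2)])
  also have "\<dots> = (\<integral>\<^sup>+y. Bx r y * (\<integral>\<^sup>+x. (\<Prod>j\<in>J. Bx r (x j) * gg c (x j - y)) \<partial>PiM J (\<lambda>_. lborel)) \<partial>lborel)"
  proof (rule nn_integral_cong)
    fix y :: "real \<times> real"
    have "(\<integral>\<^sup>+x. (\<Prod>j\<in>insert i J. Bx r ((x(i:=y)) j)) * (\<Prod>j\<in>J. gg c ((x(i:=y)) j - (x(i:=y)) i))
           \<partial>PiM J (\<lambda>_. lborel)) = (\<integral>\<^sup>+x. Bx r y * (\<Prod>j\<in>J. Bx r (x j) * gg c (x j - y)) \<partial>PiM J (\<lambda>_. lborel))"
    proof (rule nn_integral_cong)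
      fix x :: "nat \<Rightarrow> real \<times> real"
      have a1: "(\<Prod>j\<in>insert i J. Bx r ((x(i:=y)) j)) = Bx r y * (\<Prod>j\<in>J. Bx r (x j))"
      proof -
        have "(\<Prod>j\<in>J. Bx r ((x(i:=y)) j)) = (\<Prod>j\<in>J. Bx r (x j))"
          using iJ(2) by (intro prod.cong) auto
        then show ?thesis using iJ by (simp add: prod.insert)
      qed
      have a2: "(\<Prod>j\<in>J. gg c ((x(i:=y)) j - (x(i:=y)) i)) = (\<Prod>j\<in>J. gg c (x j - y))"
        using iJ by (intro prod.cong) auto
      show "(\<Prod>j\<in>insert i J. Bx r ((x(i:=y)) j)) * (\<Prod>j\<in>J. gg c ((x(i:=y)) j - (x(i:=y)) i)) =
            Bx r y * (\<Prod>j\<in>J. Bx r (x j) * gg c (x j - y))"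
        unfolding a1 a2 by (simp add: prod.distrib mult_ac)
    qed
    also have "\<dots> = Bx r y * (\<integral>\<^sup>+x. (\<Prod>j\<in>J. Bx r (x j) * gg c (x j - y)) \<partial>PiM J (\<lambda>_. lborel))"
      by (rule nn_integral_cmult) measurable
    finally show "(\<integral>\<^sup>+x. (\<Prod>j\<in>insert i J. Bx r ((x(i:=y)) j)) * (\<Prod>j\<in>J. gg c ((x(i:=y)) j - (x(i:=y)) i))
           \<partial>PiM J (\<lambda>_. lborel)) = Bx r y * (\<integral>\<^sup>+x. (\<Prod>j\<in>J. Bx r (x j) * gg c (x j - y)) \<partial>PiM J (\<lambda>_. lborel))" .
  qed
  also have "\<dots> \<le> (\<integral>\<^sup>+y. Bx r y * (K * K) ^ card J \<partial>lborel)"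
  proof (rule nn_integral_mono)
    fix y :: "real \<times> real"
    show "Bx r y * (\<integral>\<^sup>+x. (\<Prod>j\<in>J. Bx r (x j) * gg c (x j - y)) \<partial>PiM J (\<lambda>_. lborel)) \<le> Bx r y * (K * K) ^ card J"
    proof (cases "Bx r y = 0")
      case False
      have "(\<integral>\<^sup>+x. (\<Prod>j\<in>J. Bx r (x j) * gg c (x j - y)) \<partial>PiM J (\<lambda>_. lborel))
          = (\<Prod>j\<in>J. (\<integral>\<^sup>+u. Bx r u * gg c (u - y) \<partial>lborel))"
        by (rule product_nn_integral_prod[OF iJ(3)]) measurable
      also have "\<dots> \<le> (\<Prod>j\<in>J. K * K)"
        by (rule prod_mono_ennreal) (unfold K_def, rule two_d_bound, use assms False in auto)
      also have "\<dots> = (K * K) ^ card J" by simp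
      finally show ?thesis by (rule mult_left_mono) simp
    qed simp
  qed
  also have "\<dots> = (K * K) ^ card J * (\<integral>\<^sup>+y. Bx r y \<partial>lborel)"
    by (subst mult.commute) (rule nn_integral_cmult, measurable)
  also have "(\<integral>\<^sup>+y. Bx r y \<partial>lborel) = (\<integral>\<^sup>+x. indicator {-r..r} x \<partial>lborel) * (\<integral>\<^sup>+x. indicator {-r..r} x \<partial>lborel)"
    unfolding Bx_def by (rule prod_integral2) auto
  also have "(\<integral>\<^sup>+x. indicator {-r..r} x \<partial>lborel) = ennreal (2*r)"
    using assms by simp
  finally have "(\<integral>\<^sup>+z. (\<Prod>j<p. Bx r (z j)) * (\<Prod>j\<in>{..<p}-{i}. gg c (z j - z i))
           \<partial>PiM {..<p} (\<lambda>_. (lborel :: (real \<times> real) measure))) \<le> (K * K) ^ card J * (ennreal (2*r) * ennreal (2*r))" .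
  moreover have "(K * K) ^ card J * (ennreal (2*r) * ennreal (2*r)) < \<infinity>"
    using K by (simp add: ennreal_mult_less_top power_less_top_ennreal)
  ultimately show ?thesis by (rule order.strict_trans1)
qed

theorem corollary6p13:
  fixes a r :: real and p :: nat
  assumes "0 < a" and "a < 2" and "real p < 4 / a" and "0 < r"
  shows "Zint a p r < \<infinity>"
proof (cases "p = 0")
  case True
  have "Zint a p r \<le> (\<integral>\<^sup>+z. 1 \<partial>PiM ({}::nat set) (\<lambda>_. (lborel :: (real \<times> real) measure)))"
    unfolding Zint_def True lessThan_0 by (rule nn_integral_mono) (simp add: indicator_def)
  also have "\<dots> = 1" by (simp add: nn_integral_const PiM_empty)
  finally show ?thesis by (simp add: order_le_less_trans)
next
  case False
  then have p1: "1 \<le> p" by simp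
  define c where "c = a/4 * real p"
  have c0: "0 \<le> c" using assms by (simp add: c_def)
  have "real p * a < 4" using assms by (simp add: field_simps)
  then have c1: "c < 1" by (simp add: c_def field_simps)
  have "Zint a p r \<le> (\<integral>\<^sup>+z. (\<Sum>i<p. (\<Prod>j<p. Bx r (z j)) * (\<Prod>j\<in>{..<p}-{i}. gg c (z j - z i)))
      \<partial>PiM {..<p} (\<lambda>_. (lborel :: (real \<times> real) measure)))"
    unfolding Zint_def c_def by (rule nn_integral_mono) (rule pointwise[OF assms(1) p1])
  also have "\<dots> = (\<Sum>i<p. (\<integral>\<^sup>+z. (\<Prod>j<p. Bx r (z j)) * (\<Prod>j\<in>{..<p}-{i}. gg c (z j - z i))
      \<partial>PiM {..<p} (\<lambda>_. (lborel :: (real \<times> real) measure))))"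
  proof (rule nn_integral_sum)
    fix i assume "i \<in> {..<p}"
    then show "(\<lambda>z. (\<Prod>j<p. Bx r (z j)) * (\<Prod>j\<in>{..<p}-{i}. gg c (z j - z i)))
      \<in> borel_measurable (PiM {..<p} (\<lambda>_. (lborel :: (real \<times> real) measure)))"
      by measurable
  qed
  also have "\<dots> < \<infinity>"
    using term_finite[OF _ c0 c1 assms(4)] by (simp add: less_top)
  finally show ?thesis .
qed

end
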